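(* Let $f:G\to H$ be a morphism of cubical $\omega$-categories with connections such that the induced morphism of $\omega$-categories $\gamma f:\gamma G\to\gamma H$ is an isomorphism. Then $f$ is an isomorphism.
   Context: A cubical $\omega$-category with connections $G$ consists of sets $G_n$ ($n\ge0$), face maps $\partial^\alpha_i:G_n\to G_{n-1}$, degeneracies $\varepsilon_i:G_{n-1}\to G_n$, connections $\Gamma^\alpha_i:G_n\to G_{n+1}$ ($1\le i\le n$, $\alpha=\pm$) and partial compositions $\circ_j$ on $G_n$ ($1\le j\le n$, $a\circ_jb$ defined iff $\partial^+_ja=\partial^-_jb$) satisfying: the cubical identities $\partial^\alpha_i\partial^\beta_j=\partial^\beta_{j-1}\partial^\alpha_i$ ($i<j$), $\varepsilon_i\varepsilon_j=\varepsilon_{j+1}\varepsilon_i$ ($i\le j$), $\partial^\alpha_i\varepsilon_j=\varepsilon_{j-1}\partial^\alpha_i$ ($i<j$), $\varepsilon_j\partial^\alpha_{i-1}$ ($i>j$), $\mathrm{id}$ ($i=j$); the connection identities $\Gamma^\alpha_i\Gamma^\beta_j=\Gamma^\beta_{j+1}\Gamma^\alpha_i$ ($i<j$), $\Gamma^\alpha_i\Gamma^\alpha_i=\Gamma^\alpha_{i+1}\Gamma^\alpha_i$, $\Gamma^\alpha_i\varepsilon_j=\varepsilon_{j+1}\Gamma^\alpha_i$ ($i<j$), $\varepsilon_j\Gamma^\alpha_{i-1}$ ($i>j$), $\Gamma^\alpha_j\varepsilon_j=\varepsilon_{j+1}\varepsilon_j$, $\partial^\alpha_i\Gamma^\beta_j=\Gamma^\beta_{j-1}\partial^\alpha_i$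 ($i<j$), $\Gamma^\beta_j\partial^\alpha_{i-1}$ ($i>j+1$), $\partial^\alpha_j\Gamma^\alpha_j=\partial^\alpha_{j+1}\Gamma^\alpha_j=\mathrm{id}$, $\partial^\alpha_j\Gamma^{-\alpha}_j=\partial^\alpha_{j+1}\Gamma^{-\alpha}_j=\varepsilon_j\partial^\alpha_j$; $\partial^-_j(a\circ_jb)=\partial^-_ja$, $\partial^+_j(a\circ_jb)=\partial^+_jb$, $\partial^\alpha_i(a\circ_jb)=\partial^\alpha_ia\circ_{j-1}\partial^\alpha_ib$ ($i<j$), $\partial^\alpha_ia\circ_j\partial^\alpha_ib$ ($i>j$); interchange for $i\ne j$; $\varepsilon_i(a\circ_jb)=\varepsilon_ia\circ_{j+1}\varepsilon_ib$ ($i\le j$), $\varepsilon_ia\circ_j\varepsilon_ib$ ($i>j$); $\Gamma^\alpha_i(a\circ_jb)=\Gamma^\alpha_ia\circ_{j+1}\Gamma^\alpha_ib$ ($i<j$), $\Gamma^\alpha_ia\circ_j\Gamma^\alpha_ib$ ($i>j$); $\Gamma^+_j(a\circ_jb)=(\Gamma^+_ja\circ_j\varepsilon_ja)\circ_{j+1}(\varepsilon_{j+1}a\circ_j\Gamma^+_jb)$, $\Gamma^-_j(a\circ_jb)=(\Gamma^-_ja\circ_j\varepsilon_{j+1}b)\circ_{j+1}(\varepsilon_jb\circ_j\Gamma^-_jb)$; each $\circ_j$ a category structure with identities $\varepsilon_jy$; $\Gamma^+_ix\circ_i\Gamma^-_ix=\varepsilon_{i+1}x$, $\Gamma^+_ix\circ_{i+1}\Gamma^-_ix=\varepsilon_ix$.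 Morphisms preserve all this structure. Folding operations on $G_n$: $\psi_ix=\Gamma^+_i\partial^-_{i+1}x\circ_{i+1}x\circ_{i+1}\Gamma^-_i\partial^+_{i+1}x$ ($1\le i\le n-1$), $\Psi_r=\psi_{r-1}\cdots\psi_1$, $\Phi_n=\Psi_1\Psi_2\cdots\Psi_n$ ($\Phi_0=\Phi_1=\mathrm{id}$). $\gamma G$: the set $\Phi_n(G_n)$ is an $\omega$-category (globular strict $\omega$-category) with $d^\alpha_px=\varepsilon_1^{n-p}(\partial^\alpha_1)^{n-p}x$ and $x\#_py=x\circ_{n-p}y$ for $0\le p<n$, and $d^\alpha_px=x$ with only composites $x\#_px=x$ for $p\ge n$; $\varepsilon_1$ maps $\Phi_n(G_n)$ homomorphically into $\Phi_{n+1}(G_{n+1})$, and $\gamma G$ is the colimit of $\Phi_0(G_0)\xrightarrow{\varepsilon_1}\Phi_1(G_1)\xrightarrow{\varepsilon_1}\cdots$. A morphism $f$ commutes with $\Phi_n$ and $\varepsilon_1$, and $\gamma f$ is the induced morphism of colimits. *)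

theory Defs
  imports Main
begin

text \<open>The sign alpha is a bool: True is +, False is -.
   face G n i a x   : the face operator from G_n to G_(n-1)          (1 <= i <= n)
   degen G n i x    : the degeneracy eps_i from G_(n-1) to G_n        (1 <= i <= n)
   conn G n i a x   : the connection Gamma_i from G_n to G_(n+1)      (1 <= i <= n)
   comp G n j x y   : the composition x o_j y on G_n                  (1 <= j <= n)
  The operations are total functions; only their values on the carriers
  (and, for comp, on composable pairs) are constrained.\<close>

record 'a cubcat =
  cells :: "nat \<Rightarrow> 'a set"
  face  :: "nat \<Rightarrow> nat \<Rightarrow> bool \<Rightarrow> 'a \<Rightarrow> 'a"
  degen :: "nat \<Rightarrow> nat \<Rightarrow> 'a \<Rightarrow> 'a"
  conn  :: "nat \<Rightarrow> nat \<Rightarrow> bool \<Rightarrow> 'a \<Rightarrow> 'a"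
  comp  :: "nat \<Rightarrow> nat \<Rightarrow> 'a \<Rightarrow> 'a \<Rightarrow> 'a"

definition composable :: "'a cubcat \<Rightarrow> nat \<Rightarrow> nat \<Rightarrow> 'a \<Rightarrow> 'a \<Rightarrow> bool" where
  "composable G n j a b \<longleftrightarrow> a \<in> cells G n \<and> b \<in> cells G n \<and>
     face G n j True a = face G n j False b"

definition cub_closed :: "'a cubcat \<Rightarrow> bool" where
  "cub_closed G \<longleftrightarrow>
    (\<forall>n i \<alpha> x. 1 \<le> i \<and> i \<le> n \<and> x \<in> cells G n \<longrightarrow> face G n i \<alpha> x \<in> cells G (n - 1)) \<and>
    (\<forall>n i x. 1 \<le> i \<and> i \<le> n \<and> x \<in> cells G (n - 1) \<longrightarrow> degen G n i x \<in> cells G n) \<and>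
    (\<forall>n i \<alpha> x. 1 \<le> i \<and> i \<le> n \<and> x \<in> cells G n \<longrightarrow> conn G n i \<alpha> x \<in> cells G (Suc n)) \<and>
    (\<forall>n j a b. 1 \<le> j \<and> j \<le> n \<and> composable G n j a b \<longrightarrow> comp G n j a b \<in> cells G n)"

definition cub_identities :: "'a cubcat \<Rightarrow> bool" where
  "cub_identities G \<longleftrightarrow>
    (\<forall>n i j \<alpha> \<beta> x. 1 \<le> i \<and> i < j \<and> j \<le> n \<and> x \<in> cells G n \<longrightarrow>
       face G (n - 1) i \<alpha> (face G n j \<beta> x) = face G (n - 1) (j - 1) \<beta> (face G n i \<alpha> x)) \<and>
    (\<forall>n i j x. 1 \<le> i \<and> i \<le> j \<and> j \<le> n + 1 \<and> x \<in> cells G n \<longrightarrow>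
       degen G (n + 2) i (degen G (n + 1) j x) = degen G (n + 2) (j + 1) (degen G (n + 1) i x)) \<and>
    (\<forall>n i j \<alpha> x. 1 \<le> i \<and> i < j \<and> j \<le> n + 1 \<and> x \<in> cells G n \<longrightarrow>
       face G (n + 1) i \<alpha> (degen G (n + 1) j x) = degen G n (j - 1) (face G n i \<alpha> x)) \<and>
    (\<forall>n i j \<alpha> x. 1 \<le> j \<and> j < i \<and> i \<le> n + 1 \<and> x \<in> cells G n \<longrightarrow>
       face G (n + 1) i \<alpha> (degen G (n + 1) j x) = degen G n j (face G n (i - 1) \<alpha> x)) \<and>
    (\<forall>n i \<alpha> x. 1 \<le> i \<and> i \<le> n + 1 \<and> x \<in> cells G n \<longrightarrow>
       face G (n + 1) i \<alpha> (degen G (n + 1) i x) = x)"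

definition conn_identities :: "'a cubcat \<Rightarrow> bool" where
  "conn_identities G \<longleftrightarrow>
    (\<forall>n i j \<alpha> \<beta> x. 1 \<le> i \<and> i < j \<and> j \<le> n \<and> x \<in> cells G n \<longrightarrow>
       conn G (n + 1) i \<alpha> (conn G n j \<beta> x) = conn G (n + 1) (j + 1) \<beta> (conn G n i \<alpha> x)) \<and>
    (\<forall>n i \<alpha> x. 1 \<le> i \<and> i \<le> n \<and> x \<in> cells G n \<longrightarrow>
       conn G (n + 1) i \<alpha> (conn G n i \<alpha> x) = conn G (n + 1) (i + 1) \<alpha> (conn G n i \<alpha> x)) \<and>
    (\<forall>n i j \<alpha> x. 1 \<le> i \<and> i < j \<and> j \<le> n + 1 \<and> x \<in> cells G n \<longrightarrow>
       conn G (n + 1) i \<alpha> (degen G (n + 1) j x) = degen G (n + 2) (j + 1) (conn G n i \<alpha> x)) \<and>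
    (\<forall>n i j \<alpha> x. 1 \<le> j \<and> j < i \<and> i \<le> n + 1 \<and> x \<in> cells G n \<longrightarrow>
       conn G (n + 1) i \<alpha> (degen G (n + 1) j x) = degen G (n + 2) j (conn G n (i - 1) \<alpha> x)) \<and>
    (\<forall>n j \<alpha> x. 1 \<le> j \<and> j \<le> n + 1 \<and> x \<in> cells G n \<longrightarrow>
       conn G (n + 1) j \<alpha> (degen G (n + 1) j x) = degen G (n + 2) (j + 1) (degen G (n + 1) j x)) \<and>
    (\<forall>n i j \<alpha> \<beta> x. 1 \<le> i \<and> i < j \<and> j \<le> n \<and> x \<in> cells G n \<longrightarrow>
       face G (n + 1) i \<alpha> (conn G n j \<beta> x) = conn G (n - 1) (j - 1) \<beta> (face G n i \<alpha> x)) \<and>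
    (\<forall>n i j \<alpha> \<beta> x. 1 \<le> j \<and> j + 1 < i \<and> i \<le> n + 1 \<and> x \<in> cells G n \<longrightarrow>
       face G (n + 1) i \<alpha> (conn G n j \<beta> x) = conn G (n - 1) j \<beta> (face G n (i - 1) \<alpha> x)) \<and>
    (\<forall>n j \<alpha> x. 1 \<le> j \<and> j \<le> n \<and> x \<in> cells G n \<longrightarrow>
       face G (n + 1) j \<alpha> (conn G n j \<alpha> x) = x \<and>
       face G (n + 1) (j + 1) \<alpha> (conn G n j \<alpha> x) = x) \<and>
    (\<forall>n j \<alpha> x. 1 \<le> j \<and> j \<le> n \<and> x \<in> cells G n \<longrightarrow>
       face G (n + 1) j \<alpha> (conn G n j (\<not> \<alpha>) x) = degen G n j (face G n j \<alpha> x) \<and>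
       face G (n + 1) (j + 1) \<alpha> (conn G n j (\<not> \<alpha>) x) = degen G n j (face G n j \<alpha> x))"

definition comp_identities :: "'a cubcat \<Rightarrow> bool" where
  "comp_identities G \<longleftrightarrow>
    (\<forall>n j a b. 1 \<le> j \<and> j \<le> n \<and> composable G n j a b \<longrightarrow>
       face G n j False (comp G n j a b) = face G n j False a \<and>
       face G n j True (comp G n j a b) = face G n j True b) \<and>
    (\<forall>n i j \<alpha> a b. 1 \<le> i \<and> i < j \<and> j \<le> n \<and> composable G n j a b \<longrightarrow>
       face G n i \<alpha> (comp G n j a b) = comp G (n - 1) (j - 1) (face G n i \<alpha> a) (face G n i \<alpha> b)) \<and>
    (\<forall>n i j \<alpha> a b. 1 \<le> j \<and> j < i \<and> i \<le> n \<and> composable G n j a b \<longrightarrow>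
       face G n i \<alpha> (comp G n j a b) = comp G (n - 1) j (face G n i \<alpha> a) (face G n i \<alpha> b)) \<and>
    (\<forall>n i j a b c d. 1 \<le> i \<and> i \<le> n \<and> 1 \<le> j \<and> j \<le> n \<and> i \<noteq> j \<and>
       composable G n i a b \<and> composable G n i c d \<and>
       composable G n j a c \<and> composable G n j b d \<longrightarrow>
       comp G n j (comp G n i a b) (comp G n i c d) = comp G n i (comp G n j a c) (comp G n j b d)) \<and>
    (\<forall>n i j a b. 1 \<le> i \<and> i \<le> j \<and> j \<le> n \<and> composable G n j a b \<longrightarrow>
       degen G (n + 1) i (comp G n j a b) =
         comp G (n + 1) (j + 1) (degen G (n + 1) i a) (degen G (n + 1) i b)) \<and>
    (\<forall>n i j a b. 1 \<le> j \<and> j < i \<and> i \<le> n + 1 \<and> composable G n j a b \<longrightarrow>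
       degen G (n + 1) i (comp G n j a b) =
         comp G (n + 1) j (degen G (n + 1) i a) (degen G (n + 1) i b)) \<and>
    (\<forall>n i j \<alpha> a b. 1 \<le> i \<and> i < j \<and> j \<le> n \<and> composable G n j a b \<longrightarrow>
       conn G n i \<alpha> (comp G n j a b) = comp G (n + 1) (j + 1) (conn G n i \<alpha> a) (conn G n i \<alpha> b)) \<and>
    (\<forall>n i j \<alpha> a b. 1 \<le> j \<and> j < i \<and> i \<le> n \<and> composable G n j a b \<longrightarrow>
       conn G n i \<alpha> (comp G n j a b) = comp G (n + 1) j (conn G n i \<alpha> a) (conn G n i \<alpha> b)) \<and>
    (\<forall>n j a b. 1 \<le> j \<and> j \<le> n \<and> composable G n j a b \<longrightarrow>
       conn G n j True (comp G n j a b) =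
         comp G (n + 1) (j + 1)
           (comp G (n + 1) j (conn G n j True a) (degen G (n + 1) j a))
           (comp G (n + 1) j (degen G (n + 1) (j + 1) a) (conn G n j True b))) \<and>
    (\<forall>n j a b. 1 \<le> j \<and> j \<le> n \<and> composable G n j a b \<longrightarrow>
       conn G n j False (comp G n j a b) =
         comp G (n + 1) (j + 1)
           (comp G (n + 1) j (conn G n j False a) (degen G (n + 1) (j + 1) b))
           (comp G (n + 1) j (degen G (n + 1) j b) (conn G n j False b)))"

definition cat_identities :: "'a cubcat \<Rightarrow> bool" where
  "cat_identities G \<longleftrightarrow>
    (\<forall>n j a b c. 1 \<le> j \<and> j \<le> n \<and> composable G n j a b \<and> composable G n j b c \<longrightarrow>
       comp G n j (comp G n j a b) c = comp G n j a (comp G n j b c)) \<and>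
    (\<forall>n j a. 1 \<le> j \<and> j \<le> n \<and> a \<in> cells G n \<longrightarrow>
       comp G n j (degen G n j (face G n j False a)) a = a \<and>
       comp G n j a (degen G n j (face G n j True a)) = a) \<and>
    (\<forall>n i x. 1 \<le> i \<and> i \<le> n \<and> x \<in> cells G n \<longrightarrow>
       comp G (n + 1) i (conn G n i True x) (conn G n i False x) = degen G (n + 1) (i + 1) x \<and>
       comp G (n + 1) (i + 1) (conn G n i True x) (conn G n i False x) = degen G (n + 1) i x)"

definition cubical_omega_cat :: "'a cubcat \<Rightarrow> bool" where
  "cubical_omega_cat G \<longleftrightarrow> cub_closed G \<and> cub_identities G \<and> conn_identities G \<and>
     comp_identities G \<and> cat_identities G"

definition cub_hom :: "'a cubcat \<Rightarrow> 'b cubcat \<Rightarrow> (nat \<Rightarrow> 'a \<Rightarrow> 'b) \<Rightarrow> bool" where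
  "cub_hom G H f \<longleftrightarrow>
    (\<forall>n x. x \<in> cells G n \<longrightarrow> f n x \<in> cells H n) \<and>
    (\<forall>n i \<alpha> x. 1 \<le> i \<and> i \<le> n \<and> x \<in> cells G n \<longrightarrow>
       f (n - 1) (face G n i \<alpha> x) = face H n i \<alpha> (f n x)) \<and>
    (\<forall>n i x. 1 \<le> i \<and> i \<le> n \<and> x \<in> cells G (n - 1) \<longrightarrow>
       f n (degen G n i x) = degen H n i (f (n - 1) x)) \<and>
    (\<forall>n i \<alpha> x. 1 \<le> i \<and> i \<le> n \<and> x \<in> cells G n \<longrightarrow>
       f (Suc n) (conn G n i \<alpha> x) = conn H n i \<alpha> (f n x)) \<and>
    (\<forall>n j a b. 1 \<le> j \<and> j \<le> n \<and> composable G n j a b \<longrightarrow>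
       f n (comp G n j a b) = comp H n j (f n a) (f n b))"

definition cub_iso :: "'a cubcat \<Rightarrow> 'b cubcat \<Rightarrow> (nat \<Rightarrow> 'a \<Rightarrow> 'b) \<Rightarrow> bool" where
  "cub_iso G H f \<longleftrightarrow> cub_hom G H f \<and>
    (\<exists>g. cub_hom H G g \<and>
         (\<forall>n. \<forall>x \<in> cells G n. g n (f n x) = x) \<and>
         (\<forall>n. \<forall>y \<in> cells H n. f n (g n y) = y))"

definition psi :: "'a cubcat \<Rightarrow> nat \<Rightarrow> nat \<Rightarrow> 'a \<Rightarrow> 'a" where
  "psi G n i x =
     comp G n (i + 1)
       (comp G n (i + 1) (conn G (n - 1) i True (face G n (i + 1) False x)) x)
       (conn G (n - 1) i False (face G n (i + 1) True x))"

text \<open>Psi G n r = psi_(r-1) o ... o psi_1 (on G_n); Psi G n 0 = Psi G n 1 = id.\<close>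
primrec Psi :: "'a cubcat \<Rightarrow> nat \<Rightarrow> nat \<Rightarrow> 'a \<Rightarrow> 'a" where
  "Psi G n 0 x = x"
| "Psi G n (Suc r) x = (if r = 0 then x else psi G n r (Psi G n r x))"

text \<open>PhiAux G n k = Psi_1 o Psi_2 o ... o Psi_k (on G_n), so Phi_n = PhiAux G n n.\<close>
primrec PhiAux :: "'a cubcat \<Rightarrow> nat \<Rightarrow> nat \<Rightarrow> 'a \<Rightarrow> 'a" where
  "PhiAux G n 0 x = x"
| "PhiAux G n (Suc k) x = PhiAux G n k (Psi G n (Suc k) x)"

definition Phi :: "'a cubcat \<Rightarrow> nat \<Rightarrow> 'a \<Rightarrow> 'a" where
  "Phi G n x = (if n \<le> 1 then x else PhiAux G n n x)"

primrec eps1pow :: "'a cubcat \<Rightarrow> nat \<Rightarrow> nat \<Rightarrow> 'a \<Rightarrow> 'a" where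
  "eps1pow G n 0 x = x"
| "eps1pow G n (Suc k) x = degen G (n + k + 1) 1 (eps1pow G n k x)"

primrec face1pow :: "'a cubcat \<Rightarrow> nat \<Rightarrow> bool \<Rightarrow> nat \<Rightarrow> 'a \<Rightarrow> 'a" where
  "face1pow G n \<alpha> 0 x = x"
| "face1pow G n \<alpha> (Suc k) x = face G (n - k) 1 \<alpha> (face1pow G n \<alpha> k x)"

text \<open>The colimit gamma G of Phi_0(G_0) -> Phi_1(G_1) -> ... along eps_1, as the set of
  equivalence classes of pairs (n, x) with x in Phi_n(G_n).\<close>

definition gpairs :: "'a cubcat \<Rightarrow> (nat \<times> 'a) set" where
  "gpairs G = {(n, x). x \<in> Phi G n ` cells G n}"

definition gequiv :: "'a cubcat \<Rightarrow> nat \<times> 'a \<Rightarrow> nat \<times> 'a \<Rightarrow> bool" where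
  "gequiv G p q \<longleftrightarrow> p \<in> gpairs G \<and> q \<in> gpairs G \<and>
     (\<exists>k. fst p \<le> k \<and> fst q \<le> k \<and>
        eps1pow G (fst p) (k - fst p) (snd p) = eps1pow G (fst q) (k - fst q) (snd q))"

definition gclass :: "'a cubcat \<Rightarrow> nat \<Rightarrow> 'a \<Rightarrow> (nat \<times> 'a) set" where
  "gclass G n x = {q. gequiv G (n, x) q}"

record 'c omegacat =
  ocarrier :: "'c set"
  od :: "nat \<Rightarrow> bool \<Rightarrow> 'c \<Rightarrow> 'c"
  ocomp :: "nat \<Rightarrow> 'c \<Rightarrow> 'c \<Rightarrow> 'c"

definition gamma :: "'a cubcat \<Rightarrow> (nat \<times> 'a) set omegacat" where
  "gamma G =
    \<lparr> ocarrier = {gclass G n x | n x. (n, x) \<in> gpairs G},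
      od = (\<lambda>p \<alpha> c. {q. \<exists>n x. (n, x) \<in> c \<and> p < n \<and>
               gequiv G (n, eps1pow G p (n - p) (face1pow G n \<alpha> (n - p) x)) q}),
      ocomp = (\<lambda>p c e. {q. \<exists>n x y. (n, x) \<in> c \<and> (n, y) \<in> e \<and> p < n \<and>
               gequiv G (n, comp G n (n - p) x y) q}) \<rparr>"

definition gamma_map :: "'b cubcat \<Rightarrow> (nat \<Rightarrow> 'a \<Rightarrow> 'b) \<Rightarrow> (nat \<times> 'a) set \<Rightarrow> (nat \<times> 'b) set" where
  "gamma_map H f c = {q. \<exists>n x. (n, x) \<in> c \<and> gequiv H (n, f n x) q}"

definition omega_hom :: "'c omegacat \<Rightarrow> 'd omegacat \<Rightarrow> ('c \<Rightarrow> 'd) \<Rightarrow> bool" where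
  "omega_hom C D F \<longleftrightarrow>
    (\<forall>x \<in> ocarrier C. F x \<in> ocarrier D) \<and>
    (\<forall>p \<alpha> x. x \<in> ocarrier C \<longrightarrow> F (od C p \<alpha> x) = od D p \<alpha> (F x)) \<and>
    (\<forall>p x y. x \<in> ocarrier C \<and> y \<in> ocarrier C \<and> od C p True x = od C p False y \<longrightarrow>
       F (ocomp C p x y) = ocomp D p (F x) (F y))"

definition omega_iso :: "'c omegacat \<Rightarrow> 'd omegacat \<Rightarrow> ('c \<Rightarrow> 'd) \<Rightarrow> bool" where
  "omega_iso C D F \<longleftrightarrow> omega_hom C D F \<and>
    (\<exists>F'. omega_hom D C F' \<and> (\<forall>x \<in> ocarrier C. F' (F x) = x) \<and>
          (\<forall>y \<in> ocarrier D. F (F' y) = y))"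

end

theory Submission
  imports Defs
begin


locale coc =
  fixes G :: "'a cubcat"
  assumes coc: "cubical_omega_cat G"
begin

lemma face_cl: "x \<in> cells G (Suc n) \<Longrightarrow> 1 \<le> i \<Longrightarrow> i \<le> Suc n \<Longrightarrow> face G (Suc n) i \<alpha> x \<in> cells G n"
  using coc unfolding cubical_omega_cat_def cub_closed_def by (metis diff_Suc_1)
lemma degen_cl: "x \<in> cells G n \<Longrightarrow> 1 \<le> i \<Longrightarrow> i \<le> Suc n \<Longrightarrow> degen G (Suc n) i x \<in> cells G (Suc n)"
  using coc unfolding cubical_omega_cat_def cub_closed_def by (metis diff_Suc_1)
lemma conn_cl: "x \<in> cells G n \<Longrightarrow> 1 \<le> i \<Longrightarrow> i \<le> n \<Longrightarrow> conn G n i \<alpha> x \<in> cells G (Suc n)"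
  using coc unfolding cubical_omega_cat_def cub_closed_def by metis
lemma comp_cl: "composable G n j a b \<Longrightarrow> 1 \<le> j \<Longrightarrow> j \<le> n \<Longrightarrow> comp G n j a b \<in> cells G n"
  using coc unfolding cubical_omega_cat_def cub_closed_def by metis

lemma face_face: "x \<in> cells G (Suc (Suc n)) \<Longrightarrow> 1 \<le> i \<Longrightarrow> i < j \<Longrightarrow> j \<le> Suc (Suc n) \<Longrightarrow>
  face G (Suc n) i \<alpha> (face G (Suc (Suc n)) j \<beta> x) = face G (Suc n) (j - 1) \<beta> (face G (Suc (Suc n)) i \<alpha> x)"
  using coc unfolding cubical_omega_cat_def cub_identities_def by (metis diff_Suc_1)
lemma degen_degen: "x \<in> cells G n \<Longrightarrow> 1 \<le> i \<Longrightarrow> i \<le> j \<Longrightarrow> j \<le> Suc n \<Longrightarrow>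
  degen G (Suc (Suc n)) i (degen G (Suc n) j x) = degen G (Suc (Suc n)) (Suc j) (degen G (Suc n) i x)"
  using coc unfolding cubical_omega_cat_def cub_identities_def by (metis Suc_eq_plus1 add_2_eq_Suc')
lemma face_degen_lt: "x \<in> cells G n \<Longrightarrow> 1 \<le> i \<Longrightarrow> i < j \<Longrightarrow> j \<le> Suc n \<Longrightarrow>
  face G (Suc n) i \<alpha> (degen G (Suc n) j x) = degen G n (j - 1) (face G n i \<alpha> x)"
  using coc unfolding cubical_omega_cat_def cub_identities_def by (metis Suc_eq_plus1)
lemma face_degen_gt: "x \<in> cells G n \<Longrightarrow> 1 \<le> j \<Longrightarrow> j < i \<Longrightarrow> i \<le> Suc n \<Longrightarrow>
  face G (Suc n) i \<alpha> (degen G (Suc n) j x) = degen G n j (face G n (i - 1) \<alpha> x)"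
  using coc unfolding cubical_omega_cat_def cub_identities_def by (metis Suc_eq_plus1)
lemma face_degen_eq: "x \<in> cells G n \<Longrightarrow> 1 \<le> i \<Longrightarrow> i \<le> Suc n \<Longrightarrow>
  face G (Suc n) i \<alpha> (degen G (Suc n) i x) = x"
  using coc unfolding cubical_omega_cat_def cub_identities_def by (metis Suc_eq_plus1)

lemma face_conn_same: "x \<in> cells G n \<Longrightarrow> 1 \<le> j \<Longrightarrow> j \<le> n \<Longrightarrow>
  face G (Suc n) j \<alpha> (conn G n j \<alpha> x) = x \<and> face G (Suc n) (Suc j) \<alpha> (conn G n j \<alpha> x) = x"
  using coc unfolding cubical_omega_cat_def conn_identities_def by (metis Suc_eq_plus1)
lemma face_conn_opp: "x \<in> cells G n \<Longrightarrow> 1 \<le> j \<Longrightarrow> j \<le> n \<Longrightarrow>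
  face G (Suc n) j \<alpha> (conn G n j (\<not>\<alpha>) x) = degen G n j (face G n j \<alpha> x) \<and>
  face G (Suc n) (Suc j) \<alpha> (conn G n j (\<not>\<alpha>) x) = degen G n j (face G n j \<alpha> x)"
  using coc unfolding cubical_omega_cat_def conn_identities_def by (metis Suc_eq_plus1)

lemma face_comp_m: "composable G n j a b \<Longrightarrow> 1 \<le> j \<Longrightarrow> j \<le> n \<Longrightarrow>
  face G n j False (comp G n j a b) = face G n j False a"
  using coc unfolding cubical_omega_cat_def comp_identities_def by metis
lemma face_comp_p: "composable G n j a b \<Longrightarrow> 1 \<le> j \<Longrightarrow> j \<le> n \<Longrightarrow>
  face G n j True (comp G n j a b) = face G n j True b"
  using coc unfolding cubical_omega_cat_def comp_identities_def by metis
lemma face_comp_lt: "composable G (Suc n) j a b \<Longrightarrow> 1 \<le> i \<Longrightarrow> i < j \<Longrightarrow> j \<le> Suc n \<Longrightarrow>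
  face G (Suc n) i \<alpha> (comp G (Suc n) j a b) = comp G n (j - 1) (face G (Suc n) i \<alpha> a) (face G (Suc n) i \<alpha> b)"
  using coc unfolding cubical_omega_cat_def comp_identities_def by (metis diff_Suc_1)
lemma face_comp_gt: "composable G (Suc n) j a b \<Longrightarrow> 1 \<le> j \<Longrightarrow> j < i \<Longrightarrow> i \<le> Suc n \<Longrightarrow>
  face G (Suc n) i \<alpha> (comp G (Suc n) j a b) = comp G n j (face G (Suc n) i \<alpha> a) (face G (Suc n) i \<alpha> b)"
  using coc unfolding cubical_omega_cat_def comp_identities_def by (metis diff_Suc_1)
lemma interchange: "1 \<le> i \<Longrightarrow> i \<le> n \<Longrightarrow> 1 \<le> j \<Longrightarrow> j \<le> n \<Longrightarrow> i \<noteq> j \<Longrightarrow>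
       composable G n i a b \<Longrightarrow> composable G n i c d \<Longrightarrow>
       composable G n j a c \<Longrightarrow> composable G n j b d \<Longrightarrow>
       comp G n j (comp G n i a b) (comp G n i c d) = comp G n i (comp G n j a c) (comp G n j b d)"
  using coc unfolding cubical_omega_cat_def comp_identities_def by metis
lemma assoc: "1 \<le> j \<Longrightarrow> j \<le> n \<Longrightarrow> composable G n j a b \<Longrightarrow> composable G n j b c \<Longrightarrow>
       comp G n j (comp G n j a b) c = comp G n j a (comp G n j b c)"
  using coc unfolding cubical_omega_cat_def cat_identities_def by metis
lemma idl: "1 \<le> j \<Longrightarrow> j \<le> n \<Longrightarrow> a \<in> cells G n \<Longrightarrow>
       comp G n j (degen G n j (face G n j False a)) a = a"
  using coc unfolding cubical_omega_cat_def cat_identities_def by metis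
lemma idr: "1 \<le> j \<Longrightarrow> j \<le> n \<Longrightarrow> a \<in> cells G n \<Longrightarrow>
       comp G n j a (degen G n j (face G n j True a)) = a"
  using coc unfolding cubical_omega_cat_def cat_identities_def by metis
lemma conn_inv: "1 \<le> i \<Longrightarrow> i \<le> n \<Longrightarrow> x \<in> cells G n \<Longrightarrow>
       comp G (Suc n) i (conn G n i True x) (conn G n i False x) = degen G (Suc n) (Suc i) x"
  using coc unfolding cubical_omega_cat_def cat_identities_def by (metis Suc_eq_plus1)
end

definition theta :: "'a cubcat \<Rightarrow> nat \<Rightarrow> nat \<Rightarrow> 'a \<Rightarrow> 'a \<Rightarrow> 'a \<Rightarrow> 'a \<Rightarrow> 'a \<Rightarrow> 'a" where
  "theta G n i w a b c d = comp G n i (comp G n (Suc i) (degen G n i c) (conn G (n - 1) i True b))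
      (comp G n i w (comp G n (Suc i) (conn G (n - 1) i False a) (degen G n i d)))"

context coc begin

lemma theta_lemma:
  assumes x: "x \<in> cells G (Suc (Suc k))" and i: "1 \<le> i" "i \<le> Suc k"
  defines "n \<equiv> Suc (Suc k)" and "m \<equiv> Suc k"
  defines "a \<equiv> face G n (Suc i) False x" and "b \<equiv> face G n (Suc i) True x"
    and "c \<equiv> face G n i False x" and "d \<equiv> face G n i True x"
  defines "R \<equiv> conn G m i True a" and "T \<equiv> conn G m i False a"
    and "Q \<equiv> conn G m i True b" and "S \<equiv> conn G m i False b"
    and "P \<equiv> degen G n i c" and "U \<equiv> degen G n i d"
  shows "theta G n i (psi G n i x) a b c d = x"
    and "composable G n (Suc i) P Q" and "composable G n (Suc i) T U"
    and "composable G n i (psi G n i x) (comp G n (Suc i) T U)"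
    and "composable G n i (comp G n (Suc i) P Q) (comp G n i (psi G n i x) (comp G n (Suc i) T U))"
proof -
  have xn: "x \<in> cells G n" using x n_def by simp
  have i1: "1 \<le> Suc i" "Suc i \<le> n" "i \<le> n" using i n_def by auto
  have ac: "a \<in> cells G m" "b \<in> cells G m" "c \<in> cells G m" "d \<in> cells G m"
    unfolding a_def b_def c_def d_def n_def m_def using face_cl[OF x] i by auto
  have ca1: "face G m i False a = face G m i False c" and ca2: "face G m i True a = face G m i False d"
   and cb1: "face G m i False b = face G m i True c" and cb2: "face G m i True b = face G m i True d"
    unfolding a_def b_def c_def d_def n_def m_def using face_face[OF x, of i "Suc i"] i by auto
  have cells: "R \<in> cells G n" "T \<in> cells G n" "Q \<in> cells G n" "S \<in> cells G n" "P \<in> cells G n" "U \<in> cells G n"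
    unfolding R_def T_def Q_def S_def P_def U_def n_def m_def
    using conn_cl[OF ac(1)] conn_cl[OF ac(2)] degen_cl[OF ac(3)] degen_cl[OF ac(4)] i
    by (auto simp: m_def)
  have fR: "face G n i True R = a" "face G n (Suc i) True R = a"
    "face G n i False R = degen G m i (face G m i False a)" "face G n (Suc i) False R = degen G m i (face G m i False a)"
    unfolding R_def n_def using face_conn_same[OF ac(1), of i True] face_conn_opp[OF ac(1), of i False] i
    by (auto simp: m_def)
  have fT: "face G n i False T = a" "face G n (Suc i) False T = a"
    "face G n i True T = degen G m i (face G m i True a)" "face G n (Suc i) True T = degen G m i (face G m i True a)"
    unfolding T_def n_def using face_conn_same[OF ac(1), of i False] face_conn_opp[OF ac(1), of i True] i
    by (auto simp: m_def)
  have fQ: "face G n i True Q = b" "face G n (Suc i) True Q = b"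
    "face G n i False Q = degen G m i (face G m i False b)" "face G n (Suc i) False Q = degen G m i (face G m i False b)"
    unfolding Q_def n_def using face_conn_same[OF ac(2), of i True] face_conn_opp[OF ac(2), of i False] i
    by (auto simp: m_def)
  have fS: "face G n i False S = b" "face G n (Suc i) False S = b"
    "face G n i True S = degen G m i (face G m i True b)" "face G n (Suc i) True S = degen G m i (face G m i True b)"
    unfolding S_def n_def using face_conn_same[OF ac(2), of i False] face_conn_opp[OF ac(2), of i True] i
    by (auto simp: m_def)
  have fP: "\<And>\<alpha>. face G n i \<alpha> P = c" "\<And>\<alpha>. face G n (Suc i) \<alpha> P = degen G m i (face G m i \<alpha> c)"
    unfolding P_def n_def using face_degen_eq[OF ac(3)] face_degen_gt[OF ac(3), of i "Suc i"] i
    by (auto simp: m_def)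
  have fU: "\<And>\<alpha>. face G n i \<alpha> U = d" "\<And>\<alpha>. face G n (Suc i) \<alpha> U = degen G m i (face G m i \<alpha> d)"
    unfolding U_def n_def using face_degen_eq[OF ac(4)] face_degen_gt[OF ac(4), of i "Suc i"] i
    by (auto simp: m_def)
  have psi_eq: "psi G n i x = comp G n (Suc i) (comp G n (Suc i) R x) S"
    unfolding psi_def R_def S_def a_def b_def m_def n_def by simp
  have cRx: "composable G n (Suc i) R x" unfolding composable_def using fR xn cells a_def by auto
  have RXc: "comp G n (Suc i) R x \<in> cells G n" using comp_cl[OF cRx] i1 by auto
  have fRX: "face G n (Suc i) True (comp G n (Suc i) R x) = b"
    using face_comp_p[OF cRx] i1 b_def by auto
  have fRXi: "\<And>\<alpha>. face G n i \<alpha> (comp G n (Suc i) R x) = comp G m i (face G n i \<alpha> R) (face G n i \<alpha> x)"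
    using face_comp_lt[of "Suc k" "Suc i" R x i] cRx i unfolding n_def m_def by auto
  have cRXS: "composable G n (Suc i) (comp G n (Suc i) R x) S" unfolding composable_def using fRX fS RXc cells by auto
  have cPQ: "composable G n (Suc i) P Q" unfolding composable_def using fP fQ cells cb1 by auto
  have cTU: "composable G n (Suc i) T U" unfolding composable_def using fT fU cells ca2 by auto
  show "composable G n (Suc i) P Q" "composable G n (Suc i) T U" by fact+
  have TUc: "comp G n (Suc i) T U \<in> cells G n" using comp_cl[OF cTU] i1 by auto
  define p where "p = face G m i True d"
  have pc: "p \<in> cells G k" unfolding p_def m_def using face_cl ac i m_def by auto
  have fTU: "face G n (Suc i) True (comp G n (Suc i) T U) = degen G m i p"
    using face_comp_p[OF cTU] i1 fU p_def by auto
  define u3 where "u3 = degen G n (Suc i) (degen G m i p)"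
  have Dp: "degen G m i p \<in> cells G m" unfolding m_def using degen_cl[OF pc] i by auto
  have u3c: "u3 \<in> cells G n" unfolding u3_def n_def using degen_cl[OF Dp] i m_def by auto
  have A: "comp G n (Suc i) T U = comp G n (Suc i) (comp G n (Suc i) T U) u3"
    using idr[OF i1(1,2) TUc] fTU u3_def by simp
  have fu3: "face G n (Suc i) False u3 = degen G m i p" unfolding u3_def n_def
    using face_degen_eq[OF Dp] i m_def by auto
  have fu3i: "face G n i False u3 = degen G m i p" unfolding u3_def n_def m_def
    using face_degen_lt[OF Dp, of i "Suc i" False] i face_degen_eq[OF pc, of i False] m_def by auto
  have fTUi: "\<And>\<alpha>. face G n i \<alpha> (comp G n (Suc i) T U) = comp G m i (face G n i \<alpha> T) (face G n i \<alpha> U)"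
    using face_comp_lt[of "Suc k" "Suc i" T U i] cTU i unfolding n_def m_def by auto
  have adc: "composable G m i a d" unfolding composable_def using ac ca2 by auto
  have cTUu3: "composable G n (Suc i) (comp G n (Suc i) T U) u3" unfolding composable_def using TUc u3c fTU fu3 by auto
  have cRXTU: "composable G n i (comp G n (Suc i) R x) (comp G n (Suc i) T U)"
    unfolding composable_def using RXc TUc fRXi fTUi fR fT fU d_def by auto
  have cSu3: "composable G n i S u3" unfolding composable_def using cells u3c fS fu3i cb2 p_def by auto
  have cRT: "composable G n i R T" unfolding composable_def using cells fR fT by auto
  have cxU: "composable G n i x U" unfolding composable_def using cells xn fU d_def by auto
  have Su3: "comp G n i S u3 = S"
  proof -
    have e1: "face G n i True S = degen G m i p" using fS(3) cb2 p_def by simp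
    have "degen G n i (degen G m i p) = degen G n (Suc i) (degen G m i p)"
      unfolding n_def m_def using degen_degen[OF pc, of i i] i by auto
    hence "u3 = degen G n i (face G n i True S)" unfolding u3_def e1 by simp
    thus ?thesis using idr[OF i(1) i1(3) cells(4)] by simp
  qed
  have RT: "comp G n i R T = degen G n (Suc i) a" unfolding R_def T_def n_def m_def using conn_inv ac i m_def by auto
  have xU: "comp G n i x U = x" unfolding U_def d_def using idr[OF i(1) i1(3) xn] by simp
  have step1: "comp G n i (comp G n (Suc i) R x) (comp G n (Suc i) T U) = x"
  proof -
    have "comp G n i (comp G n (Suc i) R x) (comp G n (Suc i) T U) = comp G n (Suc i) (comp G n i R T) (comp G n i x U)"
      using interchange[of "Suc i" n i R x T U] i i1 cRx cTU cRT cxU by auto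
    also have "\<dots> = x" using RT xU idl[OF i1(1,2) xn] a_def by simp
    finally show ?thesis .
  qed
  have B: "comp G n i (psi G n i x) (comp G n (Suc i) T U) = comp G n (Suc i) x S"
  proof -
    have "comp G n i (psi G n i x) (comp G n (Suc i) T U)
       = comp G n i (comp G n (Suc i) (comp G n (Suc i) R x) S) (comp G n (Suc i) (comp G n (Suc i) T U) u3)"
      using psi_eq A by simp
    also have "\<dots> = comp G n (Suc i) (comp G n i (comp G n (Suc i) R x) (comp G n (Suc i) T U)) (comp G n i S u3)"
      using interchange[of "Suc i" n i] i i1 cRXS cTUu3 cRXTU cSu3 by auto
    also have "\<dots> = comp G n (Suc i) x S" using step1 Su3 by simp
    finally show ?thesis .
  qed
  have cxS: "composable G n (Suc i) x S" unfolding composable_def using xn cells fS b_def by auto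
  have cPx: "composable G n i P x" unfolding composable_def using xn cells fP c_def by auto
  have cQS: "composable G n i Q S" unfolding composable_def using cells fQ fS by auto
  have fxSi: "face G n i False (comp G n (Suc i) x S) = comp G m i c b"
    using face_comp_lt[of "Suc k" "Suc i" x S i False] cxS i fS c_def unfolding n_def m_def by auto
  have fPQi: "face G n i True (comp G n (Suc i) P Q) = comp G m i c b"
    using face_comp_lt[of "Suc k" "Suc i" P Q i True] cPQ i fP fQ unfolding n_def m_def by auto
  have PQc: "comp G n (Suc i) P Q \<in> cells G n" using comp_cl[OF cPQ] i1 by auto
  have xSc: "comp G n (Suc i) x S \<in> cells G n" using comp_cl[OF cxS] i1 by auto
  have psic: "psi G n i x \<in> cells G n" using psi_eq comp_cl[OF cRXS] i1 by auto
  have fpsi: "face G n i True (psi G n i x) = comp G m i a d"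
  proof -
    have "face G n i True (psi G n i x) = comp G m i (face G n i True (comp G n (Suc i) R x)) (face G n i True S)"
      using psi_eq face_comp_lt[of "Suc k" "Suc i" _ S i True] cRXS i unfolding n_def m_def by auto
    also have "\<dots> = comp G m i (comp G m i a d) (degen G m i (face G m i True b))"
      using fRXi fR fS d_def by simp
    also have "\<dots> = comp G m i a d" using idr[of i m "comp G m i a d"] comp_cl[OF adc] i face_comp_p[OF adc] cb2 m_def by auto
    finally show ?thesis .
  qed
  show "composable G n i (psi G n i x) (comp G n (Suc i) T U)"
    unfolding composable_def using psic TUc fpsi fTUi fT fU by auto
  show "composable G n i (comp G n (Suc i) P Q) (comp G n i (psi G n i x) (comp G n (Suc i) T U))"
    unfolding composable_def B using PQc xSc fxSi fPQi by auto
  have "theta G n i (psi G n i x) a b c d = comp G n i (comp G n (Suc i) P Q) (comp G n (Suc i) x S)"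
    using B unfolding theta_def P_def Q_def T_def U_def by (simp add: n_def m_def)
  also have "\<dots> = comp G n (Suc i) (comp G n i P x) (comp G n i Q S)"
    using interchange[of "Suc i" n i P Q x S] i i1 cPQ cxS cPx cQS by auto
  also have "\<dots> = x" using idl[OF i(1) i1(3) xn] idr[OF i1(1,2) xn] conn_inv[of i m b] ac i
    unfolding P_def c_def Q_def S_def b_def n_def m_def by simp
  finally show "theta G n i (psi G n i x) a b c d = x" .
qed

end

context coc begin

lemma psi_parts:
  assumes x: "x \<in> cells G (Suc m)" and i: "1 \<le> i" "i \<le> m"
  shows "composable G (Suc m) (Suc i) (conn G m i True (face G (Suc m) (Suc i) False x)) x"
    and "composable G (Suc m) (Suc i) (comp G (Suc m) (Suc i) (conn G m i True (face G (Suc m) (Suc i) False x)) x)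
           (conn G m i False (face G (Suc m) (Suc i) True x))"
    and "psi G (Suc m) i x = comp G (Suc m) (Suc i) (comp G (Suc m) (Suc i) (conn G m i True (face G (Suc m) (Suc i) False x)) x)
           (conn G m i False (face G (Suc m) (Suc i) True x))"
    and "psi G (Suc m) i x \<in> cells G (Suc m)"
proof -
  have a: "face G (Suc m) (Suc i) \<alpha> x \<in> cells G m" for \<alpha> using face_cl[OF x] i by auto
  show c1: "composable G (Suc m) (Suc i) (conn G m i True (face G (Suc m) (Suc i) False x)) x"
    unfolding composable_def using conn_cl[OF a] face_conn_same[OF a] i x by auto
  have f1: "face G (Suc m) (Suc i) True (comp G (Suc m) (Suc i) (conn G m i True (face G (Suc m) (Suc i) False x)) x)
     = face G (Suc m) (Suc i) True x" using face_comp_p[OF c1] i by auto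
  show c2: "composable G (Suc m) (Suc i) (comp G (Suc m) (Suc i) (conn G m i True (face G (Suc m) (Suc i) False x)) x)
           (conn G m i False (face G (Suc m) (Suc i) True x))"
    unfolding composable_def using comp_cl[OF c1] conn_cl[OF a] face_conn_same[OF a] i f1 by auto
  show p: "psi G (Suc m) i x = comp G (Suc m) (Suc i) (comp G (Suc m) (Suc i) (conn G m i True (face G (Suc m) (Suc i) False x)) x)
           (conn G m i False (face G (Suc m) (Suc i) True x))" unfolding psi_def by simp
  show "psi G (Suc m) i x \<in> cells G (Suc m)" unfolding p using comp_cl[OF c2] i by auto
qed

lemma Psi_cl: "x \<in> cells G n \<Longrightarrow> r \<le> n \<Longrightarrow> Psi G n r x \<in> cells G n"
proof (induction r)
  case 0 then show ?case by simp
next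
  case (Suc r)
  show ?case
  proof (cases "r = 0")
    case True then show ?thesis using Suc by simp
  next
    case False
    obtain m where n: "n = Suc m" using Suc by (cases n) auto
    have "Psi G n r x \<in> cells G n" using Suc by auto
    then show ?thesis using psi_parts(4)[of "Psi G n r x" m r] False Suc n by auto
  qed
qed

lemma PhiAux_cl: "x \<in> cells G n \<Longrightarrow> k \<le> n \<Longrightarrow> PhiAux G n k x \<in> cells G n"
proof (induction k arbitrary: x)
  case (Suc k)
  have "Psi G n (Suc k) x \<in> cells G n" using Psi_cl[OF Suc.prems] .
  thus ?case using Suc.IH Suc.prems by (simp del: Psi.simps)
qed simp

lemma Phi_cl: "x \<in> cells G n \<Longrightarrow> Phi G n x \<in> cells G n"
  unfolding Phi_def by (auto simp: PhiAux_cl)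

end

locale cohom = G: coc G + H: coc H for G :: "'a cubcat" and H :: "'b cubcat" +
  fixes f :: "nat \<Rightarrow> 'a \<Rightarrow> 'b"
  assumes hom: "cub_hom G H f"
begin

lemma f_cl: "x \<in> cells G n \<Longrightarrow> f n x \<in> cells H n"
  using hom unfolding cub_hom_def by blast
lemma f_face: "x \<in> cells G (Suc n) \<Longrightarrow> 1 \<le> i \<Longrightarrow> i \<le> Suc n \<Longrightarrow>
   f n (face G (Suc n) i \<alpha> x) = face H (Suc n) i \<alpha> (f (Suc n) x)"
  using hom unfolding cub_hom_def by (metis diff_Suc_1)
lemma f_degen: "x \<in> cells G n \<Longrightarrow> 1 \<le> i \<Longrightarrow> i \<le> Suc n \<Longrightarrow>
   f (Suc n) (degen G (Suc n) i x) = degen H (Suc n) i (f n x)"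
  using hom unfolding cub_hom_def by (metis diff_Suc_1)
lemma f_conn: "x \<in> cells G n \<Longrightarrow> 1 \<le> i \<Longrightarrow> i \<le> n \<Longrightarrow>
   f (Suc n) (conn G n i \<alpha> x) = conn H n i \<alpha> (f n x)"
  using hom unfolding cub_hom_def by blast
lemma f_comp: "composable G n j a b \<Longrightarrow> 1 \<le> j \<Longrightarrow> j \<le> n \<Longrightarrow>
   f n (comp G n j a b) = comp H n j (f n a) (f n b)"
  using hom unfolding cub_hom_def by blast
lemma f_composable: "composable G (Suc n) j a b \<Longrightarrow> 1 \<le> j \<Longrightarrow> j \<le> Suc n \<Longrightarrow>
   composable H (Suc n) j (f (Suc n) a) (f (Suc n) b)"
  unfolding composable_def using f_cl f_face by metis

lemma f_psi: assumes x: "x \<in> cells G (Suc m)" and i: "1 \<le> i" "i \<le> m"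
  shows "f (Suc m) (psi G (Suc m) i x) = psi H (Suc m) i (f (Suc m) x)"
proof -
  have a: "face G (Suc m) (Suc i) \<alpha> x \<in> cells G m" for \<alpha> using G.face_cl[OF x] i by auto
  have e: "f (Suc m) (conn G m i \<beta> (face G (Suc m) (Suc i) \<alpha> x)) = conn H m i \<beta> (face H (Suc m) (Suc i) \<alpha> (f (Suc m) x))"
    for \<alpha> \<beta> using f_conn[OF a] f_face[OF x] i by auto
  show ?thesis
    unfolding G.psi_parts(3)[OF x i] H.psi_parts(3)[OF f_cl[OF x] i]
    using f_comp[OF G.psi_parts(2)[OF x i]] f_comp[OF G.psi_parts(1)[OF x i]] i e by auto
qed

lemma f_Psi: "x \<in> cells G n \<Longrightarrow> r \<le> n \<Longrightarrow> f n (Psi G n r x) = Psi H n r (f n x)"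
proof (induction r)
  case 0 then show ?case by simp
next
  case (Suc r)
  show ?case
  proof (cases "r = 0")
    case True then show ?thesis by simp
  next
    case False
    obtain m where n: "n = Suc m" using Suc by (cases n) auto
    have "Psi G n r x \<in> cells G n" using Suc G.Psi_cl by auto
    then show ?thesis using f_psi[of "Psi G n r x" m r] False Suc n by auto
  qed
qed

lemma f_PhiAux: "x \<in> cells G n \<Longrightarrow> k \<le> n \<Longrightarrow> f n (PhiAux G n k x) = PhiAux H n k (f n x)"
proof (induction k arbitrary: x)
  case (Suc k)
  have "Psi G n (Suc k) x \<in> cells G n" using G.Psi_cl[OF Suc.prems] .
  thus ?case using Suc.IH Suc.prems f_Psi[of x n "Suc k"] by (simp del: Psi.simps)
qed simp

lemma f_Phi: "x \<in> cells G n \<Longrightarrow> f n (Phi G n x) = Phi H n (f n x)"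
  unfolding Phi_def by (auto simp: f_PhiAux)

end



context cohom begin

lemma faces_eq:
  assumes injm: "inj_on (f n) (cells G n)" and x: "x \<in> cells G (Suc n)" and y: "y \<in> cells G (Suc n)"
    and fxy: "f (Suc n) x = f (Suc n) y" and j: "1 \<le> j" "j \<le> Suc n"
  shows "face G (Suc n) j \<alpha> x = face G (Suc n) j \<alpha> y"
  using injm G.face_cl[OF x j] G.face_cl[OF y j] f_face[OF x j] f_face[OF y j] fxy
  unfolding inj_on_def by metis

lemma composable_reflect:
  assumes injm: "inj_on (f n) (cells G n)" and p: "p \<in> cells G (Suc n)" and q: "q \<in> cells G (Suc n)"
    and c: "composable H (Suc n) j (f (Suc n) p) (f (Suc n) q)" and j: "1 \<le> j" "j \<le> Suc n"
  shows "composable G (Suc n) j p q"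
  using injm G.face_cl[OF p j] G.face_cl[OF q j] f_face[OF p j] f_face[OF q j] c p q
  unfolding inj_on_def composable_def by metis

lemma inj_psi_step:
  assumes injm: "inj_on (f (Suc k)) (cells G (Suc k))"
    and x: "x \<in> cells G (Suc (Suc k))" and y: "y \<in> cells G (Suc (Suc k))"
    and fxy: "f (Suc (Suc k)) x = f (Suc (Suc k)) y"
    and p: "psi G (Suc (Suc k)) i x = psi G (Suc (Suc k)) i y" and i: "1 \<le> i" "i \<le> Suc k"
  shows "x = y"
proof -
  have fe: "face G (Suc (Suc k)) j \<alpha> x = face G (Suc (Suc k)) j \<alpha> y" if "1 \<le> j" "j \<le> Suc (Suc k)" for j \<alpha>
    using faces_eq[OF injm x y fxy that] .
  have "x = theta G (Suc (Suc k)) i (psi G (Suc (Suc k)) i x) (face G (Suc (Suc k)) (Suc i) False x)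
     (face G (Suc (Suc k)) (Suc i) True x) (face G (Suc (Suc k)) i False x) (face G (Suc (Suc k)) i True x)"
    using G.theta_lemma(1)[OF x i] by simp
  also have "\<dots> = theta G (Suc (Suc k)) i (psi G (Suc (Suc k)) i y) (face G (Suc (Suc k)) (Suc i) False y)
     (face G (Suc (Suc k)) (Suc i) True y) (face G (Suc (Suc k)) i False y) (face G (Suc (Suc k)) i True y)"
    using p fe i by simp
  also have "\<dots> = y" using G.theta_lemma(1)[OF y i] by simp
  finally show ?thesis .
qed

lemma inj_Psi:
  assumes injm: "inj_on (f (Suc k)) (cells G (Suc k))"
  shows "x \<in> cells G (Suc (Suc k)) \<Longrightarrow> y \<in> cells G (Suc (Suc k)) \<Longrightarrow> f (Suc (Suc k)) x = f (Suc (Suc k)) y \<Longrightarrow>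
    r \<le> Suc (Suc k) \<Longrightarrow> Psi G (Suc (Suc k)) r x = Psi G (Suc (Suc k)) r y \<Longrightarrow> x = y"
proof (induction r)
  case 0 then show ?case by simp
next
  case (Suc r)
  show ?case
  proof (cases "r = 0")
    case True then show ?thesis using Suc by simp
  next
    case False
    have c: "Psi G (Suc (Suc k)) r x \<in> cells G (Suc (Suc k))" "Psi G (Suc (Suc k)) r y \<in> cells G (Suc (Suc k))"
      using G.Psi_cl Suc by auto
    have "f (Suc (Suc k)) (Psi G (Suc (Suc k)) r x) = f (Suc (Suc k)) (Psi G (Suc (Suc k)) r y)"
      using f_Psi Suc by auto
    moreover have "psi G (Suc (Suc k)) r (Psi G (Suc (Suc k)) r x) = psi G (Suc (Suc k)) r (Psi G (Suc (Suc k)) r y)"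
      using Suc.prems False by simp
    ultimately have "Psi G (Suc (Suc k)) r x = Psi G (Suc (Suc k)) r y"
      using inj_psi_step[OF injm c] False Suc by auto
    then show ?thesis using Suc by auto
  qed
qed

lemma inj_PhiAux:
  assumes injm: "inj_on (f (Suc k)) (cells G (Suc k))"
  shows "x \<in> cells G (Suc (Suc k)) \<Longrightarrow> y \<in> cells G (Suc (Suc k)) \<Longrightarrow> f (Suc (Suc k)) x = f (Suc (Suc k)) y \<Longrightarrow>
    r \<le> Suc (Suc k) \<Longrightarrow> PhiAux G (Suc (Suc k)) r x = PhiAux G (Suc (Suc k)) r y \<Longrightarrow> x = y"
proof (induction r arbitrary: x y)
  case 0 then show ?case by simp
next
  case (Suc r)
  have c: "Psi G (Suc (Suc k)) (Suc r) x \<in> cells G (Suc (Suc k))" "Psi G (Suc (Suc k)) (Suc r) y \<in> cells G (Suc (Suc k))"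
    using G.Psi_cl[of _ "Suc (Suc k)" "Suc r"] Suc.prems by blast+
  have "f (Suc (Suc k)) (Psi G (Suc (Suc k)) (Suc r) x) = f (Suc (Suc k)) (Psi G (Suc (Suc k)) (Suc r) y)"
    using f_Psi[of x "Suc (Suc k)" "Suc r"] f_Psi[of y "Suc (Suc k)" "Suc r"] Suc.prems by metis
  moreover have "PhiAux G (Suc (Suc k)) r (Psi G (Suc (Suc k)) (Suc r) x) = PhiAux G (Suc (Suc k)) r (Psi G (Suc (Suc k)) (Suc r) y)"
    using Suc.prems(5) by (simp del: Psi.simps)
  ultimately have "Psi G (Suc (Suc k)) (Suc r) x = Psi G (Suc (Suc k)) (Suc r) y"
    using Suc.IH[OF c] Suc.prems by auto
  then show ?case using inj_Psi[OF injm, of x y "Suc r"] Suc.prems by blast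
qed

lemma surj_psi_step:
  assumes injm: "inj_on (f (Suc k)) (cells G (Suc k))" and surjm: "cells H (Suc k) \<subseteq> f (Suc k) ` cells G (Suc k)"
    and z: "z \<in> cells H (Suc (Suc k))" and v: "v \<in> cells G (Suc (Suc k))"
    and fv: "f (Suc (Suc k)) v = psi H (Suc (Suc k)) i z" and i: "1 \<le> i" "i \<le> Suc k"
  shows "\<exists>x \<in> cells G (Suc (Suc k)). f (Suc (Suc k)) x = z"
proof -
  define n where "n = Suc (Suc k)"
  define m where "m = Suc k"
  have i1: "1 \<le> Suc i" "Suc i \<le> n" "i \<le> n" using i n_def by auto
  have zf: "face H n j \<alpha> z \<in> f m ` cells G m" if "1 \<le> j" "j \<le> n" for j \<alpha>
    using surjm H.face_cl[of z "Suc k" j \<alpha>] z that n_def m_def by auto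
  obtain a' where a': "a' \<in> cells G m" "f m a' = face H n (Suc i) False z" using zf[OF i1(1,2), of False] by auto
  obtain b' where b': "b' \<in> cells G m" "f m b' = face H n (Suc i) True z" using zf[OF i1(1,2), of True] by auto
  obtain c' where c': "c' \<in> cells G m" "f m c' = face H n i False z" using zf[OF i(1) i1(3), of False] by auto
  obtain d' where d': "d' \<in> cells G m" "f m d' = face H n i True z" using zf[OF i(1) i1(3), of True] by auto
  note th = H.theta_lemma[OF z i, folded n_def m_def]
  define P where "P = degen G n i c'"
  define Q where "Q = conn G m i True b'"
  define T where "T = conn G m i False a'"
  define U where "U = degen G n i d'"
  have Pc: "P \<in> cells G n" "f n P = degen H n i (face H n i False z)"
    unfolding P_def using G.degen_cl[OF c'(1)] f_degen[OF c'(1)] c'(2) i by (auto simp: n_def m_def)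
  have Uc: "U \<in> cells G n" "f n U = degen H n i (face H n i True z)"
    unfolding U_def using G.degen_cl[OF d'(1)] f_degen[OF d'(1)] d'(2) i by (auto simp: n_def m_def)
  have Qc: "Q \<in> cells G n" "f n Q = conn H m i True (face H n (Suc i) True z)"
    unfolding Q_def using G.conn_cl[OF b'(1)] f_conn[OF b'(1)] b'(2) i by (auto simp: n_def m_def)
  have Tc: "T \<in> cells G n" "f n T = conn H m i False (face H n (Suc i) False z)"
    unfolding T_def using G.conn_cl[OF a'(1)] f_conn[OF a'(1)] a'(2) i by (auto simp: n_def m_def)
  have injm': "inj_on (f m) (cells G m)" using injm m_def by simp
  have cPQ: "composable G n (Suc i) P Q"
    using composable_reflect[OF injm, of P Q "Suc i"] Pc Qc th(2) i1 n_def m_def by auto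
  have cTU: "composable G n (Suc i) T U"
    using composable_reflect[OF injm, of T U "Suc i"] Tc Uc th(3) i1 n_def m_def by auto
  have PQ: "comp G n (Suc i) P Q \<in> cells G n" "f n (comp G n (Suc i) P Q) = comp H n (Suc i) (f n P) (f n Q)"
    using G.comp_cl[OF cPQ] f_comp[OF cPQ] i1 by auto
  have TU: "comp G n (Suc i) T U \<in> cells G n" "f n (comp G n (Suc i) T U) = comp H n (Suc i) (f n T) (f n U)"
    using G.comp_cl[OF cTU] f_comp[OF cTU] i1 by auto
  have cvTU: "composable G n i v (comp G n (Suc i) T U)"
    using composable_reflect[OF injm, of v "comp G n (Suc i) T U" i] v TU th(4) Tc Uc fv i i1 n_def m_def by auto
  have vTU: "comp G n i v (comp G n (Suc i) T U) \<in> cells G n"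
    "f n (comp G n i v (comp G n (Suc i) T U)) = comp H n i (f n v) (f n (comp G n (Suc i) T U))"
    using G.comp_cl[OF cvTU] f_comp[OF cvTU] i i1 by auto
  have cfin: "composable G n i (comp G n (Suc i) P Q) (comp G n i v (comp G n (Suc i) T U))"
    using composable_reflect[OF injm, of "comp G n (Suc i) P Q" "comp G n i v (comp G n (Suc i) T U)" i]
      PQ vTU TU th(5) Pc Qc Tc Uc fv i i1 n_def m_def by auto
  define x where "x = comp G n i (comp G n (Suc i) P Q) (comp G n i v (comp G n (Suc i) T U))"
  have "x \<in> cells G n" unfolding x_def using G.comp_cl[OF cfin] i i1 by auto
  moreover have "f n x = z"
  proof -
    have "f n x = comp H n i (f n (comp G n (Suc i) P Q)) (f n (comp G n i v (comp G n (Suc i) T U)))"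
      unfolding x_def using f_comp[OF cfin] i i1 by auto
    also have "\<dots> = theta H n i (psi H n i z) (face H n (Suc i) False z) (face H n (Suc i) True z)
         (face H n i False z) (face H n i True z)"
      unfolding theta_def using PQ vTU TU Pc Qc Tc Uc fv n_def m_def by simp
    also have "\<dots> = z" using th(1) .
    finally show ?thesis .
  qed
  ultimately show ?thesis unfolding n_def by blast
qed

lemma surj_Psi:
  assumes injm: "inj_on (f (Suc k)) (cells G (Suc k))" and surjm: "cells H (Suc k) \<subseteq> f (Suc k) ` cells G (Suc k)"
  shows "z \<in> cells H (Suc (Suc k)) \<Longrightarrow> r \<le> Suc (Suc k) \<Longrightarrow>
    \<exists>v \<in> cells G (Suc (Suc k)). f (Suc (Suc k)) v = Psi H (Suc (Suc k)) r z \<Longrightarrow>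
    \<exists>x \<in> cells G (Suc (Suc k)). f (Suc (Suc k)) x = z"
proof (induction r)
  case 0 then show ?case by simp
next
  case (Suc r)
  show ?case
  proof (cases "r = 0")
    case True then show ?thesis using Suc by simp
  next
    case False
    have c: "Psi H (Suc (Suc k)) r z \<in> cells H (Suc (Suc k))" using H.Psi_cl Suc by auto
    obtain v where "v \<in> cells G (Suc (Suc k))" "f (Suc (Suc k)) v = psi H (Suc (Suc k)) r (Psi H (Suc (Suc k)) r z)"
      using Suc.prems False by auto
    then have "\<exists>x \<in> cells G (Suc (Suc k)). f (Suc (Suc k)) x = Psi H (Suc (Suc k)) r z"
      using surj_psi_step[OF injm surjm c] False Suc.prems by auto
    then show ?thesis using Suc by auto
  qed
qed

lemma surj_PhiAux:
  assumes injm: "inj_on (f (Suc k)) (cells G (Suc k))" and surjm: "cells H (Suc k) \<subseteq> f (Suc k) ` cells G (Suc k)"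
  shows "z \<in> cells H (Suc (Suc k)) \<Longrightarrow> r \<le> Suc (Suc k) \<Longrightarrow>
    \<exists>v \<in> cells G (Suc (Suc k)). f (Suc (Suc k)) v = PhiAux H (Suc (Suc k)) r z \<Longrightarrow>
    \<exists>x \<in> cells G (Suc (Suc k)). f (Suc (Suc k)) x = z"
proof (induction r arbitrary: z)
  case 0 then show ?case by simp
next
  case (Suc r)
  have c: "Psi H (Suc (Suc k)) (Suc r) z \<in> cells H (Suc (Suc k))"
    using H.Psi_cl[OF Suc.prems(1,2)] .
  have "\<exists>v \<in> cells G (Suc (Suc k)). f (Suc (Suc k)) v = PhiAux H (Suc (Suc k)) r (Psi H (Suc (Suc k)) (Suc r) z)"
    using Suc.prems(3) by (simp del: Psi.simps)
  then have "\<exists>x \<in> cells G (Suc (Suc k)). f (Suc (Suc k)) x = Psi H (Suc (Suc k)) (Suc r) z"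
    using Suc.IH[OF c] Suc.prems by auto
  then show ?case using surj_Psi[OF injm surjm Suc.prems(1,2)] by blast
qed

end

lemma eps_add: "eps1pow G m (a + b) x = eps1pow G (m + a) b (eps1pow G m a x)"
  by (induction b) (simp_all add: add.assoc)

lemma gequiv_trans: "gequiv G p q \<Longrightarrow> gequiv G q r \<Longrightarrow> gequiv G p r"
proof -
  assume pq: "gequiv G p q" and qr: "gequiv G q r"
  obtain K1 where K1: "fst p \<le> K1" "fst q \<le> K1"
    "eps1pow G (fst p) (K1 - fst p) (snd p) = eps1pow G (fst q) (K1 - fst q) (snd q)"
    using pq unfolding gequiv_def by blast
  obtain K2 where K2: "fst q \<le> K2" "fst r \<le> K2"
    "eps1pow G (fst q) (K2 - fst q) (snd q) = eps1pow G (fst r) (K2 - fst r) (snd r)"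
    using qr unfolding gequiv_def by blast
  define K where "K = max K1 K2"
  have lift: "eps1pow G m (K - m) x = eps1pow G L (K - L) (eps1pow G m (L - m) x)" if "m \<le> L" "L \<le> K" for m L x
    using eps_add[of G m "L - m" "K - L" x] that by simp
  have "eps1pow G (fst p) (K - fst p) (snd p) = eps1pow G (fst q) (K - fst q) (snd q)"
    using lift[of "fst p" K1] lift[of "fst q" K1] K1 K_def by simp
  also have "\<dots> = eps1pow G (fst r) (K - fst r) (snd r)"
    using lift[of "fst q" K2] lift[of "fst r" K2] K2 K_def by simp
  finally show ?thesis using pq qr K1 K2 K_def unfolding gequiv_def
    by (intro conjI exI[of _ K]) auto
qed

context coc begin

lemma eps_cl: "x \<in> cells G m \<Longrightarrow> eps1pow G m j x \<in> cells G (m + j)"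
  by (induction j) (auto intro: degen_cl)

lemma face_eps_gen: "x \<in> cells G m \<Longrightarrow> face1pow G (m + j + l) \<alpha> j (eps1pow G m (j + l) x) = eps1pow G m l x"
proof (induction j arbitrary: l)
  case 0 then show ?case by simp
next
  case (Suc j)
  have e1: "m + Suc j + l = m + j + Suc l" "Suc j + l = j + Suc l" "m + j + Suc l - j = m + l + 1" by simp_all
  have "face1pow G (m + Suc j + l) \<alpha> (Suc j) (eps1pow G m (Suc j + l) x)
      = face G (m + Suc j + l - j) 1 \<alpha> (face1pow G (m + Suc j + l) \<alpha> j (eps1pow G m (Suc j + l) x))"
    by (simp only: face1pow.simps)
  also have "\<dots> = face G (m + l + 1) 1 \<alpha> (face1pow G (m + j + Suc l) \<alpha> j (eps1pow G m (j + Suc l) x))"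
    by (simp only: e1)
  also have "\<dots> = face G (m + l + 1) 1 \<alpha> (eps1pow G m (Suc l) x)" by (simp only: Suc.IH[OF Suc.prems])
  also have "\<dots> = eps1pow G m l x" using face_degen_eq[OF eps_cl[OF Suc.prems, of l], of 1 \<alpha>] by simp
  finally show ?case .
qed

lemma face_eps: "x \<in> cells G m \<Longrightarrow> face1pow G (m + j) \<alpha> j (eps1pow G m j x) = x"
  using face_eps_gen[of x m j 0] by simp

lemma eps_inj: "x \<in> cells G m \<Longrightarrow> y \<in> cells G m \<Longrightarrow> eps1pow G m j x = eps1pow G m j y \<Longrightarrow> x = y"
  by (metis face_eps)

lemma face1pow_cl: "x \<in> cells G n \<Longrightarrow> j \<le> n \<Longrightarrow> face1pow G n \<alpha> j x \<in> cells G (n - j)"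
proof (induction j)
  case 0 then show ?case by simp
next
  case (Suc j)
  have e: "n - j = Suc (n - Suc j)" using Suc by auto
  show ?case using face_cl[of "face1pow G n \<alpha> j x" "n - Suc j" 1 \<alpha>] Suc e by auto
qed

end

context cohom begin

lemma f_eps: "x \<in> cells G m \<Longrightarrow> f (m + j) (eps1pow G m j x) = eps1pow H m j (f m x)"
  by (induction j) (auto simp: f_degen G.eps_cl)

lemma f_face1pow: "x \<in> cells G n \<Longrightarrow> j \<le> n \<Longrightarrow> f (n - j) (face1pow G n \<alpha> j x) = face1pow H n \<alpha> j (f n x)"
proof (induction j)
  case 0 then show ?case by simp
next
  case (Suc j)
  have e: "n - j = Suc (n - Suc j)" using Suc by auto
  have c: "face1pow G n \<alpha> j x \<in> cells G (Suc (n - Suc j))" using G.face1pow_cl[of x n j] Suc e by auto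
  show ?case using f_face[OF c, of 1 \<alpha>] Suc e by auto
qed

lemma gpairs_f: "(n, w) \<in> gpairs G \<Longrightarrow> (n, f n w) \<in> gpairs H \<and> w \<in> cells G n"
  unfolding gpairs_def using f_Phi G.Phi_cl f_cl by auto

lemma gamma_map_class: assumes "(n, w) \<in> gpairs G"
  shows "gamma_map H f (gclass G n w) = gclass H n (f n w)"
proof
  have w: "w \<in> cells G n" "(n, f n w) \<in> gpairs H" using gpairs_f[OF assms] by auto
  show "gamma_map H f (gclass G n w) \<subseteq> gclass H n (f n w)"
  proof
    fix q assume "q \<in> gamma_map H f (gclass G n w)"
    then obtain k x where kx: "gequiv G (n, w) (k, x)" "gequiv H (k, f k x) q"
      unfolding gamma_map_def gclass_def by auto
    obtain K where K: "n \<le> K" "k \<le> K" "eps1pow G n (K - n) w = eps1pow G k (K - k) x"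
      using kx(1) unfolding gequiv_def by auto
    have x: "x \<in> cells G k" "(k, f k x) \<in> gpairs H" using kx(1) gpairs_f unfolding gequiv_def by auto
    have "eps1pow H n (K - n) (f n w) = eps1pow H k (K - k) (f k x)"
      using f_eps[OF w(1), of "K - n"] f_eps[OF x(1), of "K - k"] K by simp
    hence "gequiv H (n, f n w) (k, f k x)" unfolding gequiv_def using w x K by auto
    thus "q \<in> gclass H n (f n w)" unfolding gclass_def using gequiv_trans kx(2) by blast
  qed
  show "gclass H n (f n w) \<subseteq> gamma_map H f (gclass G n w)"
  proof
    fix q assume "q \<in> gclass H n (f n w)"
    moreover have "(n, w) \<in> gclass G n w" unfolding gclass_def gequiv_def using assms by auto
    ultimately show "q \<in> gamma_map H f (gclass G n w)" unfolding gamma_map_def gclass_def by auto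
  qed
qed

lemma gamma_inj:
  assumes iso: "omega_iso (gamma G) (gamma H) (gamma_map H f)"
    and x: "x \<in> cells G n" and y: "y \<in> cells G n" and fxy: "f n x = f n y"
  shows "Phi G n x = Phi G n y"
proof -
  obtain F' where F': "\<forall>c \<in> ocarrier (gamma G). F' (gamma_map H f c) = c"
    using iso unfolding omega_iso_def by blast
  have px: "(n, Phi G n x) \<in> gpairs G" and py: "(n, Phi G n y) \<in> gpairs G"
    unfolding gpairs_def using x y by auto
  have cx: "gclass G n (Phi G n x) \<in> ocarrier (gamma G)" and cy: "gclass G n (Phi G n y) \<in> ocarrier (gamma G)"
    unfolding gamma_def using px py by auto
  have "gamma_map H f (gclass G n (Phi G n x)) = gamma_map H f (gclass G n (Phi G n y))"
    unfolding gamma_map_class[OF px] gamma_map_class[OF py] f_Phi[OF x] f_Phi[OF y] fxy ..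
  hence eq: "gclass G n (Phi G n x) = gclass G n (Phi G n y)" using F' cx cy by metis
  have "(n, Phi G n y) \<in> gclass G n (Phi G n y)" unfolding gclass_def gequiv_def using py by auto
  hence "gequiv G (n, Phi G n x) (n, Phi G n y)" using eq unfolding gclass_def by auto
  then obtain K where "eps1pow G n (K - n) (Phi G n x) = eps1pow G n (K - n) (Phi G n y)"
    unfolding gequiv_def by auto
  thus ?thesis using G.eps_inj G.Phi_cl x y by blast
qed

lemma gamma_surj:
  assumes iso: "omega_iso (gamma G) (gamma H) (gamma_map H f)"
    and z: "z \<in> cells H n"
  shows "\<exists>u \<in> cells G n. f n u = Phi H n z"
proof -
  obtain F' where F'1: "omega_hom (gamma H) (gamma G) F'"
     and F'2: "\<forall>y \<in> ocarrier (gamma H). gamma_map H f (F' y) = y"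
    using iso unfolding omega_iso_def by blast
  have pz: "(n, Phi H n z) \<in> gpairs H" unfolding gpairs_def using z by auto
  have ez: "gclass H n (Phi H n z) \<in> ocarrier (gamma H)" unfolding gamma_def using pz by auto
  have "F' (gclass H n (Phi H n z)) \<in> ocarrier (gamma G)" using F'1 ez unfolding omega_hom_def by blast
  then obtain m u' where mu: "F' (gclass H n (Phi H n z)) = gclass G m u'" "(m, u') \<in> gpairs G"
    unfolding gamma_def by auto
  have "gclass H m (f m u') = gclass H n (Phi H n z)"
    using F'2 ez mu gamma_map_class[OF mu(2)] by metis
  moreover have "(n, Phi H n z) \<in> gclass H n (Phi H n z)" unfolding gclass_def gequiv_def using pz by auto
  ultimately have "gequiv H (m, f m u') (n, Phi H n z)" unfolding gclass_def by auto
  then obtain K where K: "m \<le> K" "n \<le> K" "eps1pow H m (K - m) (f m u') = eps1pow H n (K - n) (Phi H n z)"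
    unfolding gequiv_def by auto
  have u': "u' \<in> cells G m" using gpairs_f[OF mu(2)] by auto
  have fu': "f m u' \<in> cells H m" using f_cl[OF u'] .
  have Pz: "Phi H n z \<in> cells H n" using H.Phi_cl[OF z] .
  show ?thesis
  proof (cases "m \<le> n")
    case True
    have "eps1pow H m (K - m) (f m u') = eps1pow H n (K - n) (eps1pow H m (n - m) (f m u'))"
      using eps_add[of H m "n - m" "K - n" "f m u'"] True K by simp
    hence h: "eps1pow H n (K - n) (eps1pow H m (n - m) (f m u')) = eps1pow H n (K - n) (Phi H n z)"
      using K(3) by metis
    have "eps1pow H m (n - m) (f m u') = Phi H n z"
      using H.eps_inj[OF _ Pz h] H.eps_cl[OF fu', of "n - m"] True by auto
    moreover have "f n (eps1pow G m (n - m) u') = eps1pow H m (n - m) (f m u')"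
      using f_eps[OF u', of "n - m"] True by simp
    moreover have "eps1pow G m (n - m) u' \<in> cells G n" using G.eps_cl[OF u', of "n - m"] True by simp
    ultimately show ?thesis by metis
  next
    case False
    have "eps1pow H n (K - n) (Phi H n z) = eps1pow H m (K - m) (eps1pow H n (m - n) (Phi H n z))"
      using eps_add[of H n "m - n" "K - m" "Phi H n z"] False K by simp
    hence h: "eps1pow H m (K - m) (f m u') = eps1pow H m (K - m) (eps1pow H n (m - n) (Phi H n z))"
      using K(3) by metis
    have e: "f m u' = eps1pow H n (m - n) (Phi H n z)"
      using H.eps_inj[OF fu' _ h] H.eps_cl[OF Pz, of "m - n"] False by auto
    have "face1pow H m True (m - n) (f m u') = Phi H n z"
      using e H.face_eps[OF Pz, of "m - n" True] False by simp
    moreover have "f n (face1pow G m True (m - n) u') = face1pow H m True (m - n) (f m u')"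
      using f_face1pow[OF u', of "m - n" True] False by simp
    moreover have "face1pow G m True (m - n) u' \<in> cells G n" using G.face1pow_cl[OF u', of "m - n" True] False by simp
    ultimately show ?thesis by metis
  qed
qed

end

context cohom begin

lemma bij_all:
  assumes iso: "omega_iso (gamma G) (gamma H) (gamma_map H f)"
  shows "inj_on (f n) (cells G n) \<and> cells H n \<subseteq> f n ` cells G n"
proof (induction n rule: nat_less_induct)
  case (1 n)
  show ?case
  proof (cases "n \<le> 1")
    case True
    have "inj_on (f n) (cells G n)"
      unfolding inj_on_def
    proof (intro ballI impI)
      fix x y assume xy: "x \<in> cells G n" "y \<in> cells G n" "f n x = f n y"
      have "Phi G n x = Phi G n y" using gamma_inj[OF iso xy] .
      thus "x = y" using True unfolding Phi_def by simp
    qed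
    moreover have "cells H n \<subseteq> f n ` cells G n"
      using gamma_surj[OF iso] True unfolding Phi_def by force
    ultimately show ?thesis by blast
  next
    case False
    then obtain k where n: "n = Suc (Suc k)" by (cases n; cases "n - 1") auto
    have IH: "inj_on (f (Suc k)) (cells G (Suc k))" "cells H (Suc k) \<subseteq> f (Suc k) ` cells G (Suc k)"
      using 1 n by auto
    have "inj_on (f n) (cells G n)"
      unfolding inj_on_def
    proof (intro ballI impI)
      fix x y assume xy: "x \<in> cells G n" "y \<in> cells G n" "f n x = f n y"
      have "Phi G n x = Phi G n y" using gamma_inj[OF iso xy] .
      hence "PhiAux G n n x = PhiAux G n n y" unfolding Phi_def using n by simp
      thus "x = y" using inj_PhiAux[OF IH(1), of x y n] xy n by auto
    qed
    moreover have "cells H n \<subseteq> f n ` cells G n"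
    proof
      fix z assume z: "z \<in> cells H n"
      obtain u where "u \<in> cells G n" "f n u = Phi H n z" using gamma_surj[OF iso z] by blast
      hence "\<exists>v \<in> cells G n. f n v = PhiAux H n n z" unfolding Phi_def using n by auto
      thus "z \<in> f n ` cells G n" using surj_PhiAux[OF IH, of z n] z n by auto
    qed
    ultimately show ?thesis by blast
  qed
qed

lemma iso_result:
  assumes iso: "omega_iso (gamma G) (gamma H) (gamma_map H f)"
  shows "cub_iso G H f"
proof -
  have inj: "\<And>n. inj_on (f n) (cells G n)" and sur: "\<And>n. cells H n \<subseteq> f n ` cells G n"
    using bij_all[OF iso] by auto
  define g where "g = (\<lambda>n. inv_into (cells G n) (f n))"
  have gc: "\<And>n y. y \<in> cells H n \<Longrightarrow> g n y \<in> cells G n"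
    unfolding g_def using sur inv_into_into subsetD by metis
  have fg: "\<And>n y. y \<in> cells H n \<Longrightarrow> f n (g n y) = y"
    unfolding g_def using sur f_inv_into_f subsetD by metis
  have gf: "\<And>n x. x \<in> cells G n \<Longrightarrow> g n (f n x) = x"
    unfolding g_def using inj by (simp add: inv_into_f_f)
  have gunique: "\<And>n x y. x \<in> cells G n \<Longrightarrow> f n x = y \<Longrightarrow> g n y = x" using gf by blast
  have "cub_hom H G g"
    unfolding cub_hom_def
  proof (intro conjI allI impI)
    show "\<And>n x. x \<in> cells H n \<Longrightarrow> g n x \<in> cells G n" by (rule gc)
  next
    fix n i \<alpha> x assume a: "1 \<le> i \<and> i \<le> n \<and> x \<in> cells H n"
    then obtain m where n: "n = Suc m" by (cases n) auto
    have gx: "g (Suc m) x \<in> cells G (Suc m)" using gc a n by simp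
    have i: "1 \<le> i" "i \<le> Suc m" using a n by auto
    have c: "face G (Suc m) i \<alpha> (g (Suc m) x) \<in> cells G m" using G.face_cl[OF gx i] .
    have "f m (face G (Suc m) i \<alpha> (g (Suc m) x)) = face H (Suc m) i \<alpha> (f (Suc m) (g (Suc m) x))"
      using f_face[OF gx i] .
    also have "\<dots> = face H (Suc m) i \<alpha> x" using fg a n by simp
    finally have "g m (face H (Suc m) i \<alpha> x) = face G (Suc m) i \<alpha> (g (Suc m) x)" using gunique[OF c] by blast
    thus "g (n - 1) (face H n i \<alpha> x) = face G n i \<alpha> (g n x)" using n by simp
  next
    fix n i x assume a: "1 \<le> i \<and> i \<le> n \<and> x \<in> cells H (n - 1)"
    then obtain m where n: "n = Suc m" by (cases n) auto
    have c: "degen G (Suc m) i (g m x) \<in> cells G (Suc m)" using G.degen_cl gc a n by auto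
    have "f (Suc m) (degen G (Suc m) i (g m x)) = degen H n i x"
      using f_degen[of "g m x" m i] gc fg a n by auto
    thus "g n (degen H n i x) = degen G n i (g (n - 1) x)" using gunique[OF c] n by auto
  next
    fix n i \<alpha> x assume a: "1 \<le> i \<and> i \<le> n \<and> x \<in> cells H n"
    have c: "conn G n i \<alpha> (g n x) \<in> cells G (Suc n)" using G.conn_cl gc a by auto
    have "f (Suc n) (conn G n i \<alpha> (g n x)) = conn H n i \<alpha> x"
      using f_conn[of "g n x" n i] gc fg a by auto
    thus "g (Suc n) (conn H n i \<alpha> x) = conn G n i \<alpha> (g n x)" using gunique[OF c] by auto
  next
    fix n j a b assume a: "1 \<le> j \<and> j \<le> n \<and> composable H n j a b"
    then obtain m where n: "n = Suc m" by (cases n) auto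
    have j: "1 \<le> j" "j \<le> Suc m" using a n by auto
    have ab: "a \<in> cells H (Suc m)" "b \<in> cells H (Suc m)" using a n unfolding composable_def by auto
    have ga: "g (Suc m) a \<in> cells G (Suc m)" "g (Suc m) b \<in> cells G (Suc m)" using gc ab by auto
    have fab: "f (Suc m) (g (Suc m) a) = a" "f (Suc m) (g (Suc m) b) = b" using fg ab by auto
    have "composable H (Suc m) j (f (Suc m) (g (Suc m) a)) (f (Suc m) (g (Suc m) b))"
      unfolding fab using a n by simp
    hence cg: "composable G (Suc m) j (g (Suc m) a) (g (Suc m) b)"
      using composable_reflect[OF inj ga(1) ga(2) _ j] by blast
    have c: "comp G (Suc m) j (g (Suc m) a) (g (Suc m) b) \<in> cells G (Suc m)" using G.comp_cl[OF cg j] .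
    have "f (Suc m) (comp G (Suc m) j (g (Suc m) a) (g (Suc m) b)) = comp H (Suc m) j a b"
      using f_comp[OF cg j] fab by simp
    hence "g (Suc m) (comp H (Suc m) j a b) = comp G (Suc m) j (g (Suc m) a) (g (Suc m) b)" using gunique[OF c] by blast
    thus "g n (comp H n j a b) = comp G n j (g n a) (g n b)" using n by simp
  qed
  thus ?thesis unfolding cub_iso_def using hom gf fg by (intro conjI exI[of _ g]) auto
qed

end

theorem theorem8p6:
  fixes G :: "'a cubcat" and H :: "'b cubcat" and f :: "nat \<Rightarrow> 'a \<Rightarrow> 'b"
  assumes "cubical_omega_cat G"
    and "cubical_omega_cat H"
    and "cub_hom G H f"
    and "omega_iso (gamma G) (gamma H) (gamma_map H f)"
  shows "cub_iso G H f"
proof -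
  interpret cohom G H f using assms by (simp add: cohom_def coc_def cohom_axioms_def)
  show ?thesis using iso_result assms(4) by blast
qed

end
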